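(* Let $Z=A\cdot[0,1]^n\subseteq\mathbb{R}^d$ be a unimodular zonotope with matroid $M$. If $M$ has no coloops, then the element $x_0\otimes1$ (i.e. $x_0$) of $\mathcal{H}_Z$ lies in the interior ideal $\widetilde{\mathcal{H}_Z}$. In all cases $x_0^2\otimes1=x_0^2$ lies in $\widetilde{\mathcal{H}_Z}$. (Under the isomorphism $\mathcal{H}_Z\cong\mathbb{C}[z_S:S\subseteq[n]]/I_L^{\mathrm{SE}}$ these elements correspond to $z_\emptyset$ and $z_\emptyset^2$.)
   Context: A unimodular zonotope is $Z=A\cdot[0,1]^n\subseteq\mathbb{R}^d$ with $A$ a $d\times n$ integer matrix of rank $d$ whose maximal minors lie in $\{-1,0,1\}$; $M$ is the matroid of the columns of $A$; a coloop is an element in every basis. For finite $\mathcal{Z}\subseteq\mathbb{Z}^d\subseteq\mathbb{C}^d$, $\operatorname{gr}I(\mathcal{Z})$ is the ideal generated by top-degree components of polynomials vanishing on $\mathcal{Z}$; $I^\perp$ is the Macaulay inverse system. The harmonic algebra is $\mathcal{H}_Z=\bigoplus_{m\ge0}\mathbb{C}x_0^m\otimes(\operatorname{gr}I(mZ\cap\mathbb{Z}^d))^\perp$ and the interior ideal $\widetilde{\mathcal{H}_Z}=\bigoplus_{m\ge1}\mathbb{C}x_0^m\otimes(\operatorname{gr}I(\operatorname{int}(mZ)\cap\mathbb{Z}^d))^\perp$, both inside $\mathbb{C}[x_0,x_1,\dots,x_d]$. The ideal $I_L^{\mathrm{SE}}$ (for $L$ the complexified row space of $A$) is generated by $z_Sz_T-z_{S\cup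 T}z_{S\cap T}$ and the linear forms $\sum_{i\in C}\alpha_{C,i}z_{A'\cup\{i\}}$ for circuits $C$ with dependence $\sum_{i\in C}\alpha_{C,i}A_i=0$ and $A'\subseteq[n]\setminus C$. *)

theory Defs
  imports "HOL-Analysis.Analysis" "HOL-Library.Poly_Mapping"
begin

(* Polynomials over C in variables indexed by a type 'v:
   monomials are exponent vectors 'v \<Rightarrow>\<^sub>0 nat, polynomials are finitely supported
   coefficient functions on monomials. *)
type_synonym 'v cpoly = "('v \<Rightarrow>\<^sub>0 nat) \<Rightarrow>\<^sub>0 complex"

definition mon_deg :: "('v \<Rightarrow>\<^sub>0 nat) \<Rightarrow> nat" where
  "mon_deg \<beta> = (\<Sum>i\<in>Poly_Mapping.keys \<beta>. Poly_Mapping.lookup \<beta> i)"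

definition tot_deg :: "'v cpoly \<Rightarrow> nat" where
  "tot_deg f = Max (mon_deg ` Poly_Mapping.keys f)"

definition top_comp :: "'v cpoly \<Rightarrow> 'v cpoly" where
  "top_comp f = (\<Sum>\<beta>\<in>{\<beta>\<in>Poly_Mapping.keys f. mon_deg \<beta> = tot_deg f}. Poly_Mapping.single \<beta> (Poly_Mapping.lookup f \<beta>))"

definition poly_ideal :: "'v cpoly set \<Rightarrow> 'v cpoly set" where
  "poly_ideal G = {(\<Sum>g\<in>T. h g * g) | T h. finite T \<and> T \<subseteq> G}"

definition peval :: "'d::finite cpoly \<Rightarrow> real^'d \<Rightarrow> complex" where
  "peval f p = (\<Sum>\<beta>\<in>Poly_Mapping.keys f. Poly_Mapping.lookup f \<beta> * (\<Prod>i\<in>UNIV. (complex_of_real (p $ i)) ^ Poly_Mapping.lookup \<beta> i))"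

definition van_ideal :: "(real^'d::finite) set \<Rightarrow> 'd cpoly set" where
  "van_ideal X = {f. \<forall>p\<in>X. peval f p = 0}"

definition gr_ideal :: "(real^'d::finite) set \<Rightarrow> 'd cpoly set" where
  "gr_ideal X = poly_ideal {top_comp f | f. f \<in> van_ideal X \<and> f \<noteq> 0}"

(* coefficient of x^\<gamma> in g(\<partial>) F, where \<partial>^\<alpha> x^(\<gamma>+\<alpha>) = \<Prod> (\<gamma>_i+\<alpha>_i)!/\<gamma>_i! x^\<gamma> *)
definition diff_apply_coeff :: "'d::finite cpoly \<Rightarrow> 'd cpoly \<Rightarrow> ('d \<Rightarrow>\<^sub>0 nat) \<Rightarrow> complex" where
  "diff_apply_coeff g F \<gamma> =
     (\<Sum>\<alpha>\<in>Poly_Mapping.keys g. Poly_Mapping.lookup g \<alpha> * Poly_Mapping.lookup F (\<gamma> + \<alpha>) *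
        (\<Prod>i\<in>UNIV. of_nat (fact (Poly_Mapping.lookup (\<gamma> + \<alpha>) i)) / of_nat (fact (Poly_Mapping.lookup \<gamma> i))))"

definition inverse_system :: "'d::finite cpoly set \<Rightarrow> 'd cpoly set" where
  "inverse_system I = {F. \<forall>g\<in>I. \<forall>\<gamma>. diff_apply_coeff g F \<gamma> = 0}"

definition lattice_pts :: "(real^'d::finite) set" where
  "lattice_pts = {p. \<forall>i. p $ i \<in> \<int>}"

definition zonotope :: "real^'n::finite^'d::finite \<Rightarrow> (real^'d) set" where
  "zonotope A = {A *v t | t. \<forall>j. 0 \<le> t $ j \<and> t $ j \<le> 1}"

definition unimodular_matrix :: "real^'n::finite^'d::finite \<Rightarrow> bool" where
  "unimodular_matrix A \<longleftrightarrow>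
     (\<forall>i j. A $ i $ j \<in> \<int>) \<and> rank A = CARD('d) \<and>
     (\<forall>f :: 'd \<Rightarrow> 'n. inj f \<longrightarrow> det (\<chi> i k. A $ i $ (f k)) \<in> {-1, 0, 1})"

definition col_indep :: "real^'n::finite^'d::finite \<Rightarrow> 'n set \<Rightarrow> bool" where
  "col_indep A B \<longleftrightarrow> inj_on (\<lambda>j. column j A) B \<and> independent ((\<lambda>j. column j A) ` B)"

definition col_basis :: "real^'n::finite^'d::finite \<Rightarrow> 'n set \<Rightarrow> bool" where
  "col_basis A B \<longleftrightarrow> col_indep A B \<and> (\<forall>B'. B \<subset> B' \<longrightarrow> \<not> col_indep A B')"

definition coloop :: "real^'n::finite^'d::finite \<Rightarrow> 'n \<Rightarrow> bool" where
  "coloop A j \<longleftrightarrow> (\<forall>B. col_basis A B \<longrightarrow> j \<in> B)"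

(* Polynomials in x_0, x_1, ..., x_d: variable None is x_0, variable Some i is x_i.
   P = \<Sum>_m x_0^m \<otimes> F_m, where F_m is the coefficient polynomial of x_0^m. *)
definition x0_decomp :: "'d option cpoly \<Rightarrow> (nat \<Rightarrow> 'd cpoly) \<Rightarrow> bool" where
  "x0_decomp P F \<longleftrightarrow>
     (\<forall>\<beta>. Poly_Mapping.lookup P \<beta> = Poly_Mapping.lookup (F (Poly_Mapping.lookup \<beta> None)) (Poly_Mapping.map_key Some \<beta>))"

definition harmonic_algebra :: "real^'n::finite^'d::finite \<Rightarrow> 'd option cpoly set" where
  "harmonic_algebra A = {P. \<exists>F. x0_decomp P F \<and>
      (\<forall>m. F m \<in> inverse_system (gr_ideal ((\<lambda>x. real m *\<^sub>R x) ` zonotope A \<inter> lattice_pts)))}"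

definition interior_ideal :: "real^'n::finite^'d::finite \<Rightarrow> 'd option cpoly set" where
  "interior_ideal A = {P. \<exists>F. x0_decomp P F \<and> F 0 = 0 \<and>
      (\<forall>m\<ge>1. F m \<in> inverse_system
                 (gr_ideal (interior ((\<lambda>x. real m *\<^sub>R x) ` zonotope A) \<inter> lattice_pts)))}"

definition X0 :: "'d option cpoly" where
  "X0 = Poly_Mapping.single (Poly_Mapping.single None 1) 1"

end

theory Submission imports Defs begin

lemma mon_deg_zero: "mon_deg \<beta> = 0 \<Longrightarrow> \<beta> = 0"
proof -
  assume "mon_deg \<beta> = 0"
  hence "\<forall>i\<in>Poly_Mapping.keys \<beta>. Poly_Mapping.lookup \<beta> i = 0"
    unfolding mon_deg_def by simp
  hence "\<forall>i. Poly_Mapping.lookup \<beta> i = 0" by (auto simp: in_keys_iff)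
  thus ?thesis by (intro poly_mapping_eqI) simp
qed

lemma top_comp_const:
  assumes "Poly_Mapping.lookup (top_comp f) 0 \<noteq> 0"
  shows "Poly_Mapping.keys f = {0}"
proof -
  have "Poly_Mapping.lookup (top_comp f) 0 =
    (\<Sum>\<beta>\<in>{\<beta>\<in>Poly_Mapping.keys f. mon_deg \<beta> = tot_deg f}. Poly_Mapping.lookup (Poly_Mapping.single \<beta> (Poly_Mapping.lookup f \<beta>)) 0)"
    unfolding top_comp_def lookup_sum by (rule refl)
  then obtain \<beta> where b: "\<beta> \<in> Poly_Mapping.keys f" "mon_deg \<beta> = tot_deg f"
    "Poly_Mapping.lookup (Poly_Mapping.single \<beta> (Poly_Mapping.lookup f \<beta>)) 0 \<noteq> 0"
    using sum.not_neutral_contains_not_neutral[of _ "{\<beta>\<in>Poly_Mapping.keys f. mon_deg \<beta> = tot_deg f}"] assms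
    by (smt (verit, best) mem_Collect_eq)
  hence b0: "\<beta> = 0" by (simp add: lookup_single when_def split: if_splits)
  have md0: "mon_deg (0::'a \<Rightarrow>\<^sub>0 nat) = 0" by (simp add: mon_deg_def)
  have "\<forall>\<gamma>\<in>Poly_Mapping.keys f. mon_deg \<gamma> \<le> tot_deg f"
    unfolding tot_deg_def by (simp add: finite_keys)
  moreover have td: "tot_deg f = 0" using b(2) b0 md0 by simp
  ultimately have "\<forall>\<gamma>\<in>Poly_Mapping.keys f. \<gamma> = 0" using mon_deg_zero by auto
  thus ?thesis using b b0 by blast
qed

lemma add0: "(a::'x \<Rightarrow>\<^sub>0 nat) + b = 0 \<Longrightarrow> a = 0 \<and> b = 0"
proof -
  assume h: "a + b = 0"
  have "Poly_Mapping.lookup a i = 0 \<and> Poly_Mapping.lookup b i = 0" for i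
    using arg_cong[OF h, of "\<lambda>p. Poly_Mapping.lookup p i"] by (simp add: lookup_add)
  thus ?thesis by (auto intro: poly_mapping_eqI)
qed

lemma Sum_any_single0:
  fixes f :: "('x \<Rightarrow>\<^sub>0 nat) \<Rightarrow> 'b::comm_monoid_add"
  assumes "\<And>x. x \<noteq> 0 \<Longrightarrow> f x = 0"
  shows "Sum_any f = f 0"
proof -
  have "Sum_any f = sum f {0}"
    by (rule Sum_any.expand_superset) (use assms in auto)
  thus ?thesis by simp
qed

lemma lookup_mult_zero:
  fixes a b :: "'d cpoly"
  shows "Poly_Mapping.lookup (a * b) 0 = Poly_Mapping.lookup a 0 * Poly_Mapping.lookup b 0"
proof -
  have inner: "Sum_any (\<lambda>q. Poly_Mapping.lookup b q when 0 = l + q) = (Poly_Mapping.lookup b 0 when l = 0)" for l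
  proof -
    have "Sum_any (\<lambda>q. Poly_Mapping.lookup b q when 0 = l + q) = (Poly_Mapping.lookup b 0 when 0 = l + 0)"
      by (rule Sum_any_single0) (metis add0 when_simps(2))
    thus ?thesis by simp
  qed
  have "Sum_any (\<lambda>l. Poly_Mapping.lookup a l * (Poly_Mapping.lookup b 0 when l = 0)) = Poly_Mapping.lookup a 0 * (Poly_Mapping.lookup b 0 when (0::'d \<Rightarrow>\<^sub>0 nat) = 0)"
    by (rule Sum_any_single0) simp
  thus ?thesis unfolding lookup_mult inner by simp
qed

lemma gr_ideal_const:
  assumes "X \<noteq> {}" "g \<in> gr_ideal X"
  shows "Poly_Mapping.lookup g 0 = 0"
proof -
  obtain T h where T: "g = (\<Sum>q\<in>T. h q * q)" "finite T"
     "T \<subseteq> {top_comp f | f. f \<in> van_ideal X \<and> f \<noteq> 0}"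
    using assms(2) unfolding gr_ideal_def poly_ideal_def by blast
  obtain p where p: "p \<in> X" using assms by blast
  have "Poly_Mapping.lookup q 0 = 0" if qT: "q \<in> T" for q
  proof (rule ccontr)
    assume nz: "Poly_Mapping.lookup q 0 \<noteq> 0"
    obtain f where f: "q = top_comp f" "f \<in> van_ideal X" "f \<noteq> 0" using T(3) qT by auto
    have k: "Poly_Mapping.keys f = {0}" using top_comp_const f nz by blast
    have "peval f p = Poly_Mapping.lookup f 0" unfolding peval_def k by simp
    moreover have "peval f p = 0" using f p unfolding van_ideal_def by blast
    moreover have "Poly_Mapping.lookup f 0 \<noteq> 0" using k by (simp add: in_keys_iff[symmetric])
    ultimately show False by simp
  qed
  thus ?thesis using T by (simp add: lookup_sum lookup_mult_zero)
qed

lemma one_inv: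
  assumes "X \<noteq> {}"
  shows "(1::'d::finite cpoly) \<in> inverse_system (gr_ideal X)"
  unfolding inverse_system_def
proof (intro CollectI ballI allI)
  fix g \<gamma> assume g: "g \<in> gr_ideal X"
  have z: "Poly_Mapping.lookup g \<alpha> * Poly_Mapping.lookup (1::'d cpoly) (\<gamma> + \<alpha>) = 0" for \<alpha>
    using gr_ideal_const[OF assms g] add0[of \<gamma> \<alpha>] by (auto simp: lookup_one when_def)
  show "diff_apply_coeff g 1 \<gamma> = 0" unfolding diff_apply_coeff_def
    by (simp only: z mult_zero_left sum.neutral_const)
qed

lemma zero_inv: "(0::'d::finite cpoly) \<in> inverse_system I"
  unfolding inverse_system_def diff_apply_coeff_def by simp

lemma X0_pow: "(X0::'d option cpoly) ^ k = Poly_Mapping.single (Poly_Mapping.single None k) 1"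
  proof (induction k)
  case (Suc k)
  have eq: "Poly_Mapping.single None (Suc 0) + Poly_Mapping.single None k = Poly_Mapping.single None (Suc k)"
    by (simp add: single_add[symmetric])
  have "(X0::'d option cpoly) ^ Suc k = X0 * X0 ^ k" by simp
  also have "\<dots> = Poly_Mapping.single (Poly_Mapping.single None (Suc 0) + Poly_Mapping.single None k) 1"
    by (subst Suc) (simp add: X0_def mult_single)
  also have "\<dots> = Poly_Mapping.single (Poly_Mapping.single None (Suc k)) 1"
    by (simp only: eq)
  finally show ?case .
qed simp

lemma single_interior:
  fixes A :: "real^'n::finite^'d::finite"
  assumes k: "k \<ge> 1" and ne: "interior ((\<lambda>x. real k *\<^sub>R x) ` zonotope A) \<inter> lattice_pts \<noteq> {}"
  shows "(X0::'d option cpoly) ^ k \<in> interior_ideal A"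
proof -
  define F :: "nat \<Rightarrow> 'd cpoly" where "F = (\<lambda>m. if m = k then 1 else 0)"
  have "x0_decomp (X0 ^ k) F"
    unfolding x0_decomp_def X0_pow
  proof
    fix \<beta> :: "'d option \<Rightarrow>\<^sub>0 nat"
    have lk: "Poly_Mapping.lookup (Poly_Mapping.map_key Some \<beta>) i = Poly_Mapping.lookup \<beta> (Some i)" for i
      by (simp add: Poly_Mapping.map_key.rep_eq)
    show "Poly_Mapping.lookup (Poly_Mapping.single (Poly_Mapping.single None k) 1) \<beta> =
       Poly_Mapping.lookup (F (Poly_Mapping.lookup \<beta> None)) (Poly_Mapping.map_key Some \<beta>)"
    proof (cases "\<beta> = Poly_Mapping.single None k")
      case True
      have "Poly_Mapping.map_key Some \<beta> = 0"
        by (rule poly_mapping_eqI) (simp only: lk, simp add: True lookup_single)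
      then show ?thesis using True by (simp add: F_def lookup_single)
    next
      case False
      show ?thesis
      proof (cases "Poly_Mapping.lookup \<beta> None = k")
        case True
        have "Poly_Mapping.map_key Some \<beta> \<noteq> 0"
        proof
          assume "Poly_Mapping.map_key Some \<beta> = 0"
          hence "Poly_Mapping.lookup \<beta> (Some i) = 0" for i using lk[of i] by simp
          hence "\<beta> = Poly_Mapping.single None k"
            by (intro poly_mapping_eqI) (metis True lookup_single_eq lookup_single_not_eq not_None_eq)
          with False show False by simp
        qed
        then show ?thesis using False True by (simp add: F_def lookup_single lookup_one when_def)
      next
        case False2: False
        have "Poly_Mapping.lookup \<beta> None \<noteq> k" by fact
        then show ?thesis using False by (auto simp: F_def lookup_single when_def)
      qed
    qed
  qed
  moreover have "F 0 = 0" using k by (simp add: F_def)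
  moreover have "\<forall>m\<ge>1. F m \<in> inverse_system
       (gr_ideal (interior ((\<lambda>x. real m *\<^sub>R x) ` zonotope A) \<inter> lattice_pts))"
    using one_inv[OF ne] by (auto simp: F_def zero_inv)
  ultimately show ?thesis unfolding interior_ideal_def by blast
qed


lemma lattice_mult:
  fixes A :: "real^'n::finite^'d::finite"
  assumes "\<forall>i j. A $ i $ j \<in> \<int>" "\<forall>j. x $ j \<in> \<int>"
  shows "A *v x \<in> lattice_pts"
  unfolding lattice_pts_def using assms
  by (auto simp: matrix_vector_mult_def intro!: Ints_sum Ints_mult)

lemma open_in_interior:
  fixes A :: "real^'n::finite^'d::finite"
  assumes surj: "surj ((*v) A)" and c: "c > 0"
  shows "(*v) A ` box 0 (\<chi> i. c) \<subseteq> interior ((\<lambda>x. c *\<^sub>R x) ` zonotope A)"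
proof (rule interior_maximal)
  show "open ((*v) A ` box 0 (\<chi> i. c))"
    by (rule open_surjective_linear_image[OF open_box _ surj]) simp
  show "(*v) A ` box 0 (\<chi> i. c) \<subseteq> (\<lambda>x. c *\<^sub>R x) ` zonotope A"
  proof
    fix x assume "x \<in> (*v) A ` box 0 (\<chi> i. c)"
    then obtain t where t: "x = A *v t" "\<forall>i. 0 < t $ i \<and> t $ i < c"
      by (auto simp: mem_box_cart)
    have "x = c *\<^sub>R (A *v ((1/c) *\<^sub>R t))" using c t(1) by (simp add: matrix_vector_mult_scaleR)
    moreover have "A *v ((1/c) *\<^sub>R t) \<in> zonotope A"
      unfolding zonotope_def
    proof (intro CollectI exI conjI allI)
      fix j show "0 \<le> ((1/c) *\<^sub>R t) $ j" using t(2)[rule_format, of j] c by simp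
      show "((1/c) *\<^sub>R t) $ j \<le> 1" using t(2)[rule_format, of j] c by (simp add: field_simps)
    qed simp
    ultimately show "x \<in> (\<lambda>x. c *\<^sub>R x) ` zonotope A" by blast
  qed
qed

lemma nonloop_kernel:
  fixes A :: "real^'n::finite^'d::finite"
  assumes "\<not> coloop A j"
  shows "\<exists>w. A *v w = 0 \<and> w $ j \<noteq> 0"
proof -
  obtain B where B: "col_basis A B" "j \<notin> B" using assms coloop_def by blast
  let ?c = "\<lambda>k. column k A"
  have ind: "inj_on ?c B" "independent (?c ` B)"
    using B(1) unfolding col_basis_def col_indep_def by auto
  have fin: "finite B" by simp
  have inspan: "?c j \<in> span (?c ` B)"
  proof (rule ccontr)
    assume ns: "?c j \<notin> span (?c ` B)"
    have nin: "?c j \<notin> ?c ` B"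
    proof
      assume "?c j \<in> ?c ` B"
      hence "?c j \<in> span (?c ` B)" by (rule span_base)
      with ns show False by simp
    qed
    hence "inj_on ?c (insert j B)" using ind(1) by auto
    moreover have "independent (?c ` insert j B)" using ns ind(2) nin by (simp add: independent_insert)
    ultimately have "col_indep A (insert j B)" by (simp add: col_indep_def)
    moreover have "B \<subset> insert j B" using B(2) by auto
    ultimately show False using B(1) col_basis_def by blast
  qed
  then obtain u where u: "?c j = (\<Sum>v\<in>?c ` B. u v *\<^sub>R v)" using span_finite[of "?c ` B"] fin by auto
  hence u2: "?c j = (\<Sum>k\<in>B. u (?c k) *\<^sub>R ?c k)" by (simp add: sum.reindex[OF ind(1)])
  define w where "w = (\<chi> k. if k = j then -1 else if k \<in> B then u (?c k) else 0)"
  have "A *v w = (\<Sum>k\<in>UNIV. w$k *\<^sub>R ?c k)" by (simp add: matrix_mult_sum scalar_mult_eq_scaleR)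
  also have "\<dots> = (\<Sum>k\<in>insert j B. w$k *\<^sub>R ?c k)"
    by (rule sum.mono_neutral_right) (auto simp: w_def)
  also have "\<dots> = w$j *\<^sub>R ?c j + (\<Sum>k\<in>B. w$k *\<^sub>R ?c k)" using B(2) fin by simp
  also have "(\<Sum>k\<in>B. w$k *\<^sub>R ?c k) = (\<Sum>k\<in>B. u (?c k) *\<^sub>R ?c k)"
    by (rule sum.cong) (use B(2) in \<open>auto simp: w_def\<close>)
  also have "w$j *\<^sub>R ?c j + (\<Sum>k\<in>B. u (?c k) *\<^sub>R ?c k) = 0"
    using u2 by (simp add: w_def)
  finally show ?thesis by (intro exI[of _ w]) (simp add: w_def)
qed

lemma kernel_nz:
  fixes A :: "real^'n::finite^'d::finite"
  assumes nc: "\<forall>j. \<not> coloop A j" and fin: "finite S"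
  shows "\<exists>v. A *v v = 0 \<and> (\<forall>i\<in>S. v$i \<noteq> 0)"
  using fin
proof (induction S rule: finite_induct)
  case empty
  show ?case by (intro exI[of _ 0]) simp
next
  case (insert k S)
  obtain v where v: "A *v v = 0" "\<forall>i\<in>S. v$i \<noteq> 0" using insert.IH by blast
  obtain w where w: "A *v w = 0" "w$k \<noteq> 0" using nonloop_kernel nc by blast
  have "finite (insert 0 (range (\<lambda>i. - v$i / w$i)))" by simp
  then obtain c :: real where c: "c \<notin> insert 0 (range (\<lambda>i. - v$i / w$i))"
    using ex_new_if_finite[OF infinite_UNIV_char_0] by blast
  have "A *v (v + c *\<^sub>R w) = 0" by (simp add: matrix_vector_right_distrib matrix_vector_mult_scaleR v w)
  moreover have "(v + c *\<^sub>R w)$i \<noteq> 0" if i: "i \<in> insert k S" for i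
  proof (cases "w$i = 0")
    case True
    then have "i \<in> S" using i w(2) by auto
    then show ?thesis using True v(2) by simp
  next
    case False
    have "c \<noteq> - v$i / w$i" using c by auto
    then show ?thesis using False by (auto simp: field_simps)
  qed
  ultimately show ?case by blast
qed

theorem lemma6p3:
  fixes A :: "real^'n::finite^'d::finite"
  assumes "unimodular_matrix A"
  shows "((\<forall>j. \<not> coloop A j) \<longrightarrow> (X0 :: 'd option cpoly) \<in> interior_ideal A)
         \<and> (X0 :: 'd option cpoly) ^ 2 \<in> interior_ideal A"
proof
  have intA: "\<forall>i j. A $ i $ j \<in> \<int>" and rk: "rank A = CARD('d)"
    using assms unfolding unimodular_matrix_def by auto
  have surj: "surj ((*v) A)" using rk full_rank_surjective by blast
  show "(\<forall>j. \<not> coloop A j) \<longrightarrow> (X0 :: 'd option cpoly) \<in> interior_ideal A"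
  proof
    assume nc: "\<forall>j. \<not> coloop A j"
    obtain v where v: "A *v v = 0" "\<forall>i. v$i \<noteq> 0" using kernel_nz[OF nc, of UNIV] by auto
    define e where "e = 1 / (1 + norm v)"
    have e: "e > 0" unfolding e_def by (simp add: add_pos_nonneg)
    define ind :: "real^'n" where "ind = (\<chi> i. if v$i < 0 then 1 else 0)"
    define t where "t = ind + e *\<^sub>R v"
    have "A *v t = A *v ind" by (simp add: t_def matrix_vector_right_distrib matrix_vector_mult_scaleR v)
    have small: "e * \<bar>v$i\<bar> < 1" for i
    proof -
      have "e * \<bar>v$i\<bar> \<le> e * norm v" using e component_le_norm_cart by (simp add: mult_left_mono)
      also have "\<dots> < 1"
      proof -
        have p: "0 < 1 + norm v" by (simp add: add_pos_nonneg)
        show ?thesis unfolding e_def using p by (simp add: divide_less_eq)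
      qed
      finally show ?thesis .
    qed
    have tb: "t \<in> box 0 (\<chi> i. (1::real))" unfolding mem_box_cart
    proof
      fix i
      have ti: "t$i = (if v$i < 0 then 1 else 0) + e * v$i" by (simp add: t_def ind_def)
      have s: "e * \<bar>v$i\<bar> < 1" by (rule small)
      have "0 < t $ i \<and> t $ i < 1"
      proof (cases "v$i < 0")
        case True
        have "e * v$i < 0" using e True by (simp add: mult_pos_neg)
        moreover have "e * \<bar>v$i\<bar> = - (e * v$i)" using True by simp
        ultimately show ?thesis using ti True s by simp
      next
        case False
        hence "v$i > 0" using v(2)[rule_format, of i] by simp
        hence "e * v$i > 0" "e * \<bar>v$i\<bar> = e * v$i" using e by auto
        thus ?thesis using ti False s by simp
      qed
      thus "0 $ i < t $ i \<and> t $ i < (\<chi> i. (1::real)) $ i" by simp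
    qed
    have "A *v t \<in> (*v) A ` box 0 (\<chi> i. (1::real))" using tb by (rule imageI)
    hence "A *v t \<in> interior ((\<lambda>x. 1 *\<^sub>R x) ` zonotope A)"
      using open_in_interior[OF surj, of 1] by (meson subsetD zero_less_one)
    moreover have "A *v t \<in> lattice_pts"
      using \<open>A *v t = A *v ind\<close> lattice_mult[OF intA, of ind] by (simp add: ind_def)
    ultimately have "interior ((\<lambda>x. real 1 *\<^sub>R x) ` zonotope A) \<inter> lattice_pts \<noteq> {}" by auto
    from single_interior[OF _ this] show "(X0 :: 'd option cpoly) \<in> interior_ideal A" by simp
  qed
  have "(\<chi> i. (1::real)) \<in> box 0 (\<chi> i. 2)" by (simp add: mem_box_cart)
  hence "A *v (\<chi> i. (1::real)) \<in> (*v) A ` box 0 (\<chi> i. 2)" by (rule imageI)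
  hence "A *v (\<chi> i. (1::real)) \<in> interior ((\<lambda>x. 2 *\<^sub>R x) ` zonotope A)"
    using open_in_interior[OF surj, of 2] by (meson subsetD zero_less_numeral)
  moreover have "A *v (\<chi> i. (1::real)) \<in> lattice_pts" using lattice_mult[OF intA] by simp
  ultimately have "interior ((\<lambda>x. real 2 *\<^sub>R x) ` zonotope A) \<inter> lattice_pts \<noteq> {}" by auto
  from single_interior[OF _ this] show "(X0 :: 'd option cpoly) ^ 2 \<in> interior_ideal A" by simp
qed

end
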